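(* For any graph $G$, $\chi_c(G,\pm)=2\chi_c(G)$.
   Context: Graphs are finite, may have multiple edges, no loops. A signed graph $(G,\sigma)$ is a graph $G$ with a signature $\sigma:E(G)\to\{+1,-1\}$. The digon graph $(G,\pm)$ has vertex set $V(G)$ and, for each pair $\{u,v\}$ forming an edge of $G$, both a positive edge $uv$ and a negative edge $uv$. For real $r\ge 2$, $C^r$ is the circle of circumference $r$, $d_{C^r}(x,y)=\min\{|x-y|,r-|x-y|\}$, $\overline{x}=x+r/2\pmod r$. A circular $r$-coloring of a signed graph is $f:V\to C^r$ with $d_{C^r}(f(u),f(v))\ge1$ for each positive edge $uv$ and $d_{C^r}(f(u),\overline{f(v)})\ge1$ for each negative edge $uv$; the signed circular chromatic number $\chi_c(G,\sigma)$ is the infimum of such $r\ge2$. For the unsigned graph $G$, a circular $r$-coloring requires $d_{C^r}(f(u),f(v))\ge1$ for every edge, and $\chi_c(G)$ is the infimum of such $r$. *)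

theory Defs
  imports Complex_Main
begin

definition multigraph :: "'a set \<Rightarrow> 'e set \<Rightarrow> ('e \<Rightarrow> 'a set) \<Rightarrow> bool" where
  "multigraph V E ends \<longleftrightarrow> finite V \<and> finite E \<and>
     (\<forall>e\<in>E. ends e \<subseteq> V \<and> card (ends e) = 2)"

text \<open>Circle C^r represented by the interval [0,r).\<close>
definition circ_dist :: "real \<Rightarrow> real \<Rightarrow> real \<Rightarrow> real" where
  "circ_dist r x y = min \<bar>x - y\<bar> (r - \<bar>x - y\<bar>)"

definition antipode :: "real \<Rightarrow> real \<Rightarrow> real" where
  "antipode r x = (if x + r / 2 < r then x + r / 2 else x - r / 2)"

text \<open>Signed graph: signature sigma with values in {1,-1}.\<close>
definition signed_circ_coloring ::
  "'a set \<Rightarrow> 'e set \<Rightarrow> ('e \<Rightarrow> 'a set) \<Rightarrow> ('e \<Rightarrow> int) \<Rightarrow> real \<Rightarrow> ('a \<Rightarrow> real) \<Rightarrow> bool" where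
  "signed_circ_coloring V E ends \<sigma> r f \<longleftrightarrow>
     (\<forall>v\<in>V. 0 \<le> f v \<and> f v < r) \<and>
     (\<forall>e\<in>E. \<forall>u v. ends e = {u, v} \<longrightarrow>
        (if \<sigma> e = 1 then circ_dist r (f u) (f v) \<ge> 1
         else circ_dist r (f u) (antipode r (f v)) \<ge> 1))"

definition signed_circ_chi ::
  "'a set \<Rightarrow> 'e set \<Rightarrow> ('e \<Rightarrow> 'a set) \<Rightarrow> ('e \<Rightarrow> int) \<Rightarrow> real" where
  "signed_circ_chi V E ends \<sigma> =
     Inf {r. r \<ge> 2 \<and> (\<exists>f. signed_circ_coloring V E ends \<sigma> r f)}"

definition circ_coloring ::
  "'a set \<Rightarrow> 'e set \<Rightarrow> ('e \<Rightarrow> 'a set) \<Rightarrow> real \<Rightarrow> ('a \<Rightarrow> real) \<Rightarrow> bool" where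
  "circ_coloring V E ends r f \<longleftrightarrow>
     (\<forall>v\<in>V. 0 \<le> f v \<and> f v < r) \<and>
     (\<forall>e\<in>E. \<forall>u v. ends e = {u, v} \<longrightarrow> circ_dist r (f u) (f v) \<ge> 1)"

definition circ_chi :: "'a set \<Rightarrow> 'e set \<Rightarrow> ('e \<Rightarrow> 'a set) \<Rightarrow> real" where
  "circ_chi V E ends = Inf {r. r \<ge> 1 \<and> (\<exists>f. circ_coloring V E ends r f)}"

text \<open>Digon graph (G,\<pm>): each edge e gives a positive edge (e,True) and a negative
  edge (e,False) with the same ends.\<close>
definition digon_edges :: "'e set \<Rightarrow> ('e \<times> bool) set" where
  "digon_edges E = E \<times> (UNIV :: bool set)"

definition digon_ends :: "('e \<Rightarrow> 'a set) \<Rightarrow> 'e \<times> bool \<Rightarrow> 'a set" where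
  "digon_ends ends p = ends (fst p)"

definition digon_sign :: "'e \<times> bool \<Rightarrow> int" where
  "digon_sign p = (if snd p then 1 else -1)"

end

theory Submission
  imports Defs
begin

lemma fwd:
  fixes x y r :: real
  assumes "0 \<le> x" "x < r" "0 \<le> y" "y < r" "circ_dist r x y \<ge> 1"
  shows "circ_dist (2*r) x y \<ge> 1 \<and> circ_dist (2*r) x (antipode (2*r) y) \<ge> 1"
  using assms unfolding circ_dist_def antipode_def
  by (auto simp: abs_if split: if_splits)

definition hh :: "real \<Rightarrow> real \<Rightarrow> real" where
  "hh r x = (if x < r/2 then x else x - r/2)"

lemma bwd:
  fixes x y r :: real
  assumes "0 \<le> x" "x < r" "0 \<le> y" "y < r" "circ_dist r x y \<ge> 1"
    "circ_dist r x (antipode r y) \<ge> 1"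
  shows "circ_dist (r/2) (hh r x) (hh r y) \<ge> 1"
  using assms unfolding circ_dist_def antipode_def hh_def
  by (auto simp: abs_if split: if_splits)

lemma signed_iff:
  "signed_circ_coloring V (digon_edges E) (digon_ends ends) digon_sign r f \<longleftrightarrow>
   (\<forall>v\<in>V. 0 \<le> f v \<and> f v < r) \<and>
   (\<forall>e\<in>E. \<forall>u v. ends e = {u, v} \<longrightarrow>
        circ_dist r (f u) (f v) \<ge> 1 \<and> circ_dist r (f u) (antipode r (f v)) \<ge> 1)"
  unfolding signed_circ_coloring_def digon_edges_def digon_ends_def digon_sign_def
  apply (auto simp: Ball_def)
  apply (metis (full_types))+
  done

lemma Inf_double:
  fixes S :: "real set"
  assumes "S \<noteq> {}" "bdd_below S"
  shows "Inf ((\<lambda>r. 2*r) ` S) = 2 * Inf S"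
proof (rule antisym)
  have bb: "bdd_below ((\<lambda>r. 2*r) ` S)"
  proof -
    obtain m where "\<forall>s\<in>S. m \<le> s" using assms(2) unfolding bdd_below_def by auto
    then have "\<forall>t\<in>(\<lambda>r. 2*r) ` S. 2*m \<le> t" by auto
    then show ?thesis unfolding bdd_below_def by blast
  qed
  have "Inf ((\<lambda>r. 2*r) ` S) / 2 \<le> Inf S"
  proof (rule cInf_greatest[OF assms(1)])
    fix s assume "s \<in> S"
    then have "Inf ((\<lambda>r. 2*r) ` S) \<le> 2*s" by (intro cInf_lower bb) auto
    then show "Inf ((\<lambda>r. 2*r) ` S) / 2 \<le> s" by simp
  qed
  then show "Inf ((\<lambda>r. 2*r) ` S) \<le> 2 * Inf S" by simp
  show "2 * Inf S \<le> Inf ((\<lambda>r. 2*r) ` S)"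
  proof (rule cInf_greatest)
    show "(\<lambda>r. 2*r) ` S \<noteq> {}" using assms(1) by simp
    fix t assume "t \<in> (\<lambda>r. 2*r) ` S"
    then obtain s where "s \<in> S" "t = 2*s" by auto
    then show "2 * Inf S \<le> t" using cInf_lower[OF _ assms(2)] by auto
  qed
qed

theorem lemma6:
  fixes V :: "'a set" and E :: "'e set" and ends :: "'e \<Rightarrow> 'a set"
  assumes "multigraph V E ends"
  shows "signed_circ_chi V (digon_edges E) (digon_ends ends) digon_sign
           = 2 * circ_chi V E ends"
proof -
  have fin: "finite V" and ed: "\<And>e. e \<in> E \<Longrightarrow> ends e \<subseteq> V \<and> card (ends e) = 2"
    using assms unfolding multigraph_def by auto
  define SU where "SU = {r. r \<ge> 1 \<and> (\<exists>f. circ_coloring V E ends r f)}"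
  define SS where "SS = {r. r \<ge> 2 \<and> (\<exists>f. signed_circ_coloring V (digon_edges E) (digon_ends ends) digon_sign r f)}"
  have eq: "SS = (\<lambda>r. 2*r) ` SU"
  proof
    show "(\<lambda>r. 2*r) ` SU \<subseteq> SS"
    proof
      fix t assume "t \<in> (\<lambda>r. 2*r) ` SU"
      then obtain r g where t: "t = 2*r" and r1: "r \<ge> 1" and g: "circ_coloring V E ends r g"
        unfolding SU_def by auto
      have "signed_circ_coloring V (digon_edges E) (digon_ends ends) digon_sign (2*r) g"
        unfolding signed_iff
      proof (intro conjI ballI allI impI)
        fix v assume "v \<in> V" then show "0 \<le> g v" "g v < 2*r" using g r1
          unfolding circ_coloring_def by force+
      next
        fix e u v assume e: "e \<in> E" "ends e = {u, v}"
        then have uv: "u \<in> V" "v \<in> V" using ed by auto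
        have "circ_dist r (g u) (g v) \<ge> 1" using g e unfolding circ_coloring_def by blast
        moreover have "0 \<le> g u" "g u < r" "0 \<le> g v" "g v < r" using g uv unfolding circ_coloring_def by auto
        ultimately have "circ_dist (2*r) (g u) (g v) \<ge> 1 \<and> circ_dist (2*r) (g u) (antipode (2*r) (g v)) \<ge> 1"
          by (intro fwd) auto
        then show "circ_dist (2*r) (g u) (g v) \<ge> 1" "circ_dist (2*r) (g u) (antipode (2*r) (g v)) \<ge> 1"
          by auto
      qed
      then show "t \<in> SS" unfolding SS_def using t r1 by auto
    qed
  next
    show "SS \<subseteq> (\<lambda>r. 2*r) ` SU"
    proof
      fix r assume "r \<in> SS"
      then obtain f where r2: "r \<ge> 2" and f: "signed_circ_coloring V (digon_edges E) (digon_ends ends) digon_sign r f"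
        unfolding SS_def by auto
      note f' = f[unfolded signed_iff]
      have "circ_coloring V E ends (r/2) (\<lambda>v. hh r (f v))"
        unfolding circ_coloring_def
      proof (intro conjI ballI allI impI)
        fix v assume "v \<in> V" then show "0 \<le> hh r (f v)" "hh r (f v) < r/2" using f'
          unfolding hh_def by auto
      next
        fix e u v assume e: "e \<in> E" "ends e = {u, v}"
        then have uv: "u \<in> V" "v \<in> V" using ed by auto
        show "circ_dist (r/2) (hh r (f u)) (hh r (f v)) \<ge> 1"
          apply (rule bwd) using f' e uv by auto
      qed
      then have "r/2 \<in> SU" unfolding SU_def using r2 by auto
      then show "r \<in> (\<lambda>r. 2*r) ` SU" by (intro image_eqI[of _ _ "r/2"]) auto
    qed
  qed
  have ne: "SU \<noteq> {}"
  proof -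
    obtain h where h: "bij_betw h V {0..<card V}" using ex_bij_betw_finite_nat[OF fin] by blast
    have "circ_coloring V E ends (real (card V) + 1) (\<lambda>v. real (h v))"
      unfolding circ_coloring_def
    proof (intro conjI ballI allI impI)
      fix v assume v: "v \<in> V" then show "0 \<le> real (h v)" by simp
      have "h v < card V" using h v unfolding bij_betw_def by auto
      then show "real (h v) < real (card V) + 1" by simp
    next
      fix e u v assume e: "e \<in> E" "ends e = {u, v}"
      then have uv: "u \<in> V" "v \<in> V" using ed by auto
      have "u \<noteq> v" using ed[OF e(1)] e(2) by auto
      then have ne: "h u \<noteq> h v" using h uv unfolding bij_betw_def inj_on_def by auto
      have "h u < card V" "h v < card V" using h uv unfolding bij_betw_def by auto
      then show "circ_dist (real (card V) + 1) (real (h u)) (real (h v)) \<ge> 1"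
        using ne unfolding circ_dist_def by (auto simp: abs_if)
    qed
    moreover have "real (card V) + 1 \<ge> 1" by simp
    ultimately show ?thesis unfolding SU_def by blast
  qed
  have bdd: "bdd_below SU" unfolding SU_def bdd_below_def by auto
  have "signed_circ_chi V (digon_edges E) (digon_ends ends) digon_sign = Inf SS"
    unfolding signed_circ_chi_def SS_def by simp
  also have "\<dots> = 2 * Inf SU" using eq Inf_double[OF ne bdd] by simp
  also have "\<dots> = 2 * circ_chi V E ends" unfolding circ_chi_def SU_def by simp
  finally show ?thesis .
qed

end
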